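(* Let $X$ be a quandle. The following are equivalent: (1) $X$ is a kei; (2) the identity map of $X$ is a good involution; (3) $X$ has a good involution which is a quandle homomorphism; (4) every good involution of $X$ is a quandle homomorphism, and $X$ has at least one good involution.
   Context: A quandle is a set $X$ with a binary operation $(x,y)\mapsto x^y$ such that $x^x=x$; for all $x,y$ there is a unique $z$ with $z^y=x$ (written $x^{y^{-1}}$); and $(x^y)^z=(x^z)^{(y^z)}$. A kei is a quandle with $(x^y)^y=x$ for all $x,y$ (equivalently $x^y=x^{y^{-1}}$). A good involution is a map $\rho:X\to X$ with $\rho\circ\rho={\rm id}$, $\rho(x^y)=\rho(x)^y$ and $x^{\rho(y)}=x^{y^{-1}}$ for all $x,y$. A quandle homomorphism is a map $f$ with $f(x^y)=f(x)^{f(y)}$. *)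

theory Defs
  imports Main
begin

text \<open>A quandle on a carrier set X with operation op, where op x y stands for x^y.\<close>

definition quandle :: "'a set \<Rightarrow> ('a \<Rightarrow> 'a \<Rightarrow> 'a) \<Rightarrow> bool" where
  "quandle X op \<longleftrightarrow>
     (\<forall>x\<in>X. \<forall>y\<in>X. op x y \<in> X) \<and>
     (\<forall>x\<in>X. op x x = x) \<and>
     (\<forall>x\<in>X. \<forall>y\<in>X. \<exists>!z. z \<in> X \<and> op z y = x) \<and>
     (\<forall>x\<in>X. \<forall>y\<in>X. \<forall>z\<in>X. op (op x y) z = op (op x z) (op y z))"

text \<open>x^(y^-1): the unique z in X with z^y = x.\<close>
definition qinv :: "'a set \<Rightarrow> ('a \<Rightarrow> 'a \<Rightarrow> 'a) \<Rightarrow> 'a \<Rightarrow> 'a \<Rightarrow> 'a" where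
  "qinv X op x y = (THE z. z \<in> X \<and> op z y = x)"

definition kei :: "'a set \<Rightarrow> ('a \<Rightarrow> 'a \<Rightarrow> 'a) \<Rightarrow> bool" where
  "kei X op \<longleftrightarrow> quandle X op \<and> (\<forall>x\<in>X. \<forall>y\<in>X. op (op x y) y = x)"

definition good_involution :: "'a set \<Rightarrow> ('a \<Rightarrow> 'a \<Rightarrow> 'a) \<Rightarrow> ('a \<Rightarrow> 'a) \<Rightarrow> bool" where
  "good_involution X op \<rho> \<longleftrightarrow>
     (\<forall>x\<in>X. \<rho> x \<in> X) \<and>
     (\<forall>x\<in>X. \<rho> (\<rho> x) = x) \<and>
     (\<forall>x\<in>X. \<forall>y\<in>X. \<rho> (op x y) = op (\<rho> x) y) \<and>
     (\<forall>x\<in>X. \<forall>y\<in>X. op x (\<rho> y) = qinv X op x y)"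

definition quandle_hom :: "'a set \<Rightarrow> ('a \<Rightarrow> 'a \<Rightarrow> 'a) \<Rightarrow> 'b set \<Rightarrow> ('b \<Rightarrow> 'b \<Rightarrow> 'b) \<Rightarrow> ('a \<Rightarrow> 'b) \<Rightarrow> bool" where
  "quandle_hom X op Y op' f \<longleftrightarrow>
     (\<forall>x\<in>X. f x \<in> Y) \<and> (\<forall>x\<in>X. \<forall>y\<in>X. f (op x y) = op' (f x) (f y))"

end

theory Submission
  imports Defs
begin

lemma qinv_props:
  assumes q: "quandle X op" and x: "x \<in> X" and y: "y \<in> X"
  shows "qinv X op x y \<in> X \<and> op (qinv X op x y) y = x"
proof -
  from q x y have "\<exists>!z. z \<in> X \<and> op z y = x" unfolding quandle_def by blast
  then show ?thesis unfolding qinv_def by (rule theI')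
qed

lemma qinv_unique:
  assumes q: "quandle X op" and x: "x \<in> X" and y: "y \<in> X" and z: "z \<in> X" "op z y = x"
  shows "z = qinv X op x y"
proof -
  from q x y have "\<exists>!z. z \<in> X \<and> op z y = x" unfolding quandle_def by blast
  then show ?thesis unfolding qinv_def using z by (metis (mono_tags, lifting) the_equality)
qed

lemma id_good_iff:
  assumes q: "quandle X op"
  shows "good_involution X op id \<longleftrightarrow> (\<forall>x\<in>X. \<forall>y\<in>X. op x y = qinv X op x y)"
  unfolding good_involution_def by simp

theorem proposition3p4:
  fixes X :: "'a set" and op :: "'a \<Rightarrow> 'a \<Rightarrow> 'a"
  assumes "quandle X op"
  shows "(kei X op \<longleftrightarrow> good_involution X op id)
       \<and> (good_involution X op id \<longleftrightarrow>
            (\<exists>\<rho>. good_involution X op \<rho> \<and> quandle_hom X op X op \<rho>))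
       \<and> ((\<exists>\<rho>. good_involution X op \<rho> \<and> quandle_hom X op X op \<rho>) \<longleftrightarrow>
            ((\<forall>\<rho>. good_involution X op \<rho> \<longrightarrow> quandle_hom X op X op \<rho>)
             \<and> (\<exists>\<rho>. good_involution X op \<rho>)))"
proof -
  note q = assms
  have cl: "\<And>x y. x \<in> X \<Longrightarrow> y \<in> X \<Longrightarrow> op x y \<in> X" using q unfolding quandle_def by blast
  have idhom: "quandle_hom X op X op id" using cl unfolding quandle_hom_def by simp
  have A: "kei X op \<longleftrightarrow> good_involution X op id"
  proof
    assume k: "kei X op"
    show "good_involution X op id"
      unfolding id_good_iff[OF q]
    proof (intro ballI)
      fix x y assume x: "x \<in> X" and y: "y \<in> X"
      show "op x y = qinv X op x y"
        using qinv_unique[OF q x y cl[OF x y]] k x y unfolding kei_def by blast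
    qed
  next
    assume g: "good_involution X op id"
    have "\<forall>x\<in>X. \<forall>y\<in>X. op (op x y) y = x"
      using g qinv_props[OF q] unfolding id_good_iff[OF q] by metis
    then show "kei X op" using q unfolding kei_def by blast
  qed
  have B1: "good_involution X op id \<Longrightarrow> good_involution X op \<rho> \<Longrightarrow> quandle_hom X op X op \<rho>" for \<rho>
  proof -
    assume g: "good_involution X op id" and r: "good_involution X op \<rho>"
    have e: "\<forall>x\<in>X. \<forall>y\<in>X. op x y = qinv X op x y" using g unfolding id_good_iff[OF q] .
    have "\<forall>x\<in>X. \<forall>y\<in>X. \<rho> (op x y) = op (\<rho> x) (\<rho> y)"
    proof (intro ballI)
      fix x y assume x: "x \<in> X" and y: "y \<in> X"
      have rx: "\<rho> x \<in> X" using r x unfolding good_involution_def by blast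
      have "\<rho> (op x y) = op (\<rho> x) y" using r x y unfolding good_involution_def by blast
      also have "\<dots> = qinv X op (\<rho> x) y" using e rx y by blast
      also have "\<dots> = op (\<rho> x) (\<rho> y)" using r rx y unfolding good_involution_def by metis
      finally show "\<rho> (op x y) = op (\<rho> x) (\<rho> y)" .
    qed
    then show ?thesis using r unfolding quandle_hom_def good_involution_def by blast
  qed
  have B2: "good_involution X op \<rho> \<Longrightarrow> quandle_hom X op X op \<rho> \<Longrightarrow> good_involution X op id" for \<rho>
  proof -
    assume r: "good_involution X op \<rho>" and h: "quandle_hom X op X op \<rho>"
    show ?thesis unfolding id_good_iff[OF q]
    proof (intro ballI)
      fix x y assume x: "x \<in> X" and y: "y \<in> X"
      have rx: "\<rho> x \<in> X" and rrx: "\<rho> (\<rho> x) = x" using r x unfolding good_involution_def by blast+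
      have "op (\<rho> (\<rho> x)) (\<rho> y) = \<rho> (op (\<rho> x) y)" using h rx y unfolding quandle_hom_def by metis
      also have "\<dots> = op (\<rho> (\<rho> x)) y" using r rx y unfolding good_involution_def by blast
      finally have "op x (\<rho> y) = op x y" using rrx by simp
      then show "op x y = qinv X op x y" using r x y unfolding good_involution_def by metis
    qed
  qed
  show ?thesis using A B1 B2 idhom by blast
qed

end
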